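(* For every LTL formula $\varphi$ in positive normal form, the cardinality of the set of partial derivative descendants $\Delta_{\Sigma^*}(\varphi)$ is bounded by $O(2^n)$, where $n$ is the size of $\varphi$.
   Context: Fix a finite set $AP$, a finite alphabet $\Sigma$ and $I:\Sigma\to\mathcal P(AP)$. LTL formulae in positive normal form: $\varphi,\psi ::= p \mid \neg p \mid \mathbf{tt} \mid \mathbf{ff} \mid \varphi\wedge\psi \mid \varphi\vee\psi \mid \mathbf{X}\varphi \mid \varphi\,\mathbf{U}\,\psi \mid \varphi\,\mathbf{R}\,\psi$; $\mathbf F\varphi=\mathbf{tt}\,\mathbf U\varphi$, $\mathbf G\varphi=\mathbf{ff}\,\mathbf R\varphi$. The size of a formula is the number of literals, temporal operators and Boolean operators in it. A temporal formula is one whose outermost operator is not $\wedge$ or $\vee$; conjunctions of temporal formulae are normalised modulo associativity, commutativity and idempotence w.r.t. a fixed total order ($\mathbf{tt}$ the empty conjunction). $\mathrm{SIMP}(\varphi\wedge\psi)=\{\varphi'\wedge\psi'\mid\varphi'\in\mathrm{SIMP}(\varphi),\psi'\in\mathrm{SIMP}(\psi)\}$, $\mathrm{SIMP}(\varphi\vee\psi)=\mathrm{SIMP}(\varphi)\cup\mathrm{SIMP}(\psi)$, $\mathrm{SIMP}(\varphi)=\{\varphi\}$ for temporal $\varphi$. For a literal $\ell$ ($p$ or $\neg p$): $x\models p$ iff $p\in I(x)$, $x\models\neg p$ iff $p\notin I(x)$. Direct partial derivative: $\Delta_x(\mathbf{tt})=\{\mathbf{tt}\}$; $\Delta_x(\mathbf{ff})=\emptyset$;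 $\Delta_x(\ell)=\{\mathbf{tt}\}$ if $x\models\ell$, else $\emptyset$; $\Delta_x(\varphi\vee\psi)=\Delta_x(\varphi)\cup\Delta_x(\psi)$; $\Delta_x(\varphi\wedge\psi)=\{\varphi'\wedge\psi'\mid\varphi'\in\Delta_x(\varphi),\psi'\in\Delta_x(\psi)\}$; $\Delta_x(\mathbf X\varphi)=\mathrm{SIMP}(\varphi)$; $\Delta_x(\varphi\mathbf U\psi)=\Delta_x(\psi)\cup\{\varphi'\wedge(\varphi\mathbf U\psi)\mid\varphi'\in\Delta_x(\varphi)\}$; $\Delta_x(\varphi\mathbf R\psi)=\{\varphi'\wedge\psi'\mid\varphi'\in\Delta_x(\varphi),\psi'\in\Delta_x(\psi)\}\cup\{\psi'\wedge(\varphi\mathbf R\psi)\mid\psi'\in\Delta_x(\psi)\}$; $\Delta_x(\mathbf F\varphi)=\Delta_x(\varphi)\cup\{\mathbf F\varphi\}$; $\Delta_x(\mathbf G\varphi)=\{\varphi'\wedge\mathbf G\varphi\mid\varphi'\in\Delta_x(\varphi)\}$. For words: $\Delta_\varepsilon(\varphi)=\{\varphi\}$, $\Delta_{xw}(\varphi)=\bigcup_{\varphi'\in\Delta_x(\varphi)}\Delta_w(\varphi')$, and $\Delta_{\Sigma^*}(\varphi)=\bigcup_{w\in\Sigma^*}\Delta_w(\varphi)$. *)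

theory Defs
  imports Main
begin

datatype 'a ltl =
    Prop 'a | NProp 'a | TT | FF
  | And "'a ltl" "'a ltl" | Or "'a ltl" "'a ltl"
  | Next "'a ltl" | Until "'a ltl" "'a ltl" | Release "'a ltl" "'a ltl"

abbreviation Ev :: "'a ltl \<Rightarrow> 'a ltl" where "Ev \<phi> \<equiv> Until TT \<phi>"
abbreviation Alw :: "'a ltl \<Rightarrow> 'a ltl" where "Alw \<phi> \<equiv> Release FF \<phi>"

fun fsize :: "'a ltl \<Rightarrow> nat" where
  "fsize (Prop p) = 1"
| "fsize (NProp p) = 1"
| "fsize TT = 0"
| "fsize FF = 0"
| "fsize (And a b) = 1 + fsize a + fsize b"
| "fsize (Or a b) = 1 + fsize a + fsize b"
| "fsize (Next a) = 1 + fsize a"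
| "fsize (Until a b) = 1 + fsize a + fsize b"
| "fsize (Release a b) = 1 + fsize a + fsize b"

fun temporal :: "'a ltl \<Rightarrow> bool" where
  "temporal (And a b) = False"
| "temporal (Or a b) = False"
| "temporal _ = True"

fun conjuncts :: "'a ltl \<Rightarrow> 'a ltl set" where
  "conjuncts (And a b) = conjuncts a \<union> conjuncts b"
| "conjuncts TT = {}"
| "conjuncts \<phi> = {\<phi>}"

fun conj_list :: "'a ltl list \<Rightarrow> 'a ltl" where
  "conj_list [] = TT"
| "conj_list [a] = a"
| "conj_list (a # xs) = And a (conj_list xs)"

text \<open>Canonical (normalised modulo ACI) conjunction of a finite set of temporal
  formulae: a fixed choice of an enumeration of the set.\<close>
definition conj_set :: "'a ltl set \<Rightarrow> 'a ltl" where
  "conj_set S = conj_list (SOME xs. set xs = S \<and> distinct xs)"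

definition mk_and :: "'a ltl \<Rightarrow> 'a ltl \<Rightarrow> 'a ltl" where
  "mk_and a b = conj_set (conjuncts a \<union> conjuncts b)"

fun SIMP :: "'a ltl \<Rightarrow> 'a ltl set" where
  "SIMP (And a b) = {mk_and a' b' | a' b'. a' \<in> SIMP a \<and> b' \<in> SIMP b}"
| "SIMP (Or a b) = SIMP a \<union> SIMP b"
| "SIMP \<phi> = {\<phi>}"

fun pd :: "('s \<Rightarrow> 'a set) \<Rightarrow> 's \<Rightarrow> 'a ltl \<Rightarrow> 'a ltl set" where
  "pd I x TT = {TT}"
| "pd I x FF = {}"
| "pd I x (Prop p) = (if p \<in> I x then {TT} else {})"
| "pd I x (NProp p) = (if p \<notin> I x then {TT} else {})"
| "pd I x (Or a b) = pd I x a \<union> pd I x b"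
| "pd I x (And a b) = {mk_and a' b' | a' b'. a' \<in> pd I x a \<and> b' \<in> pd I x b}"
| "pd I x (Next a) = SIMP a"
| "pd I x (Until a b) =
     pd I x b \<union> {mk_and a' (Until a b) | a'. a' \<in> pd I x a}"
| "pd I x (Release a b) =
     {mk_and a' b' | a' b'. a' \<in> pd I x a \<and> b' \<in> pd I x b}
     \<union> {mk_and b' (Release a b) | b'. b' \<in> pd I x b}"

fun pd_word :: "('s \<Rightarrow> 'a set) \<Rightarrow> 's list \<Rightarrow> 'a ltl \<Rightarrow> 'a ltl set" where
  "pd_word I [] \<phi> = {\<phi>}"
| "pd_word I (x # w) \<phi> = (\<Union>\<phi>' \<in> pd I x \<phi>. pd_word I w \<phi>')"

definition descendants :: "('s \<Rightarrow> 'a set) \<Rightarrow> 'a ltl \<Rightarrow> 'a ltl set" where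
  "descendants I \<phi> = (\<Union>w \<in> lists UNIV. pd_word I w \<phi>)"

end

theory Submission
  imports Defs
begin

fun subs :: "'a ltl \<Rightarrow> 'a ltl set" where
  "subs (And a b) = insert (And a b) (subs a \<union> subs b)"
| "subs (Or a b) = insert (Or a b) (subs a \<union> subs b)"
| "subs (Next a) = insert (Next a) (subs a)"
| "subs (Until a b) = insert (Until a b) (subs a \<union> subs b)"
| "subs (Release a b) = insert (Release a b) (subs a \<union> subs b)"
| "subs t = {t}"

lemma subs_self: "t \<in> subs t" by (cases t) auto

lemma subs_trans: "t \<in> subs s \<Longrightarrow> subs t \<subseteq> subs s"
  by (induction s) auto

lemma finite_subs: "finite (subs t)" by (induction t) auto

lemma card_ins_un: "card (insert x (A \<union> B)) \<le> 1 + card A + card (B::'b set)"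
proof -
  have "card (insert x (A \<union> B)) \<le> Suc (card (A \<union> B))" by (cases "finite (A \<union> B)") (auto simp: card_insert_if)
  thus ?thesis using card_Un_le[of A B] by simp
qed

lemma card_subs: "card (subs t - {TT, FF}) \<le> fsize t"
proof (induction t)
  case (And a b)
  have "subs (And a b) - {TT,FF} = insert (And a b) ((subs a - {TT,FF}) \<union> (subs b - {TT,FF}))" by auto
  moreover have "card (insert (And a b) ((subs a - {TT,FF}) \<union> (subs b - {TT,FF}))) \<le> 1 + card (subs a - {TT,FF}) + card (subs b - {TT,FF})"
    by (rule card_ins_un)
  ultimately show ?case using And by simp
next
  case (Or a b)
  have "subs (Or a b) - {TT,FF} = insert (Or a b) ((subs a - {TT,FF}) \<union> (subs b - {TT,FF}))" by auto
  moreover have "card (insert (Or a b) ((subs a - {TT,FF}) \<union> (subs b - {TT,FF}))) \<le> 1 + card (subs a - {TT,FF}) + card (subs b - {TT,FF})"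
    by (rule card_ins_un)
  ultimately show ?case using Or by simp
next
  case (Until a b)
  have "subs (Until a b) - {TT,FF} = insert (Until a b) ((subs a - {TT,FF}) \<union> (subs b - {TT,FF}))" by auto
  moreover have "card (insert (Until a b) ((subs a - {TT,FF}) \<union> (subs b - {TT,FF}))) \<le> 1 + card (subs a - {TT,FF}) + card (subs b - {TT,FF})"
    by (rule card_ins_un)
  ultimately show ?case using Until by simp
next
  case (Release a b)
  have "subs (Release a b) - {TT,FF} = insert (Release a b) ((subs a - {TT,FF}) \<union> (subs b - {TT,FF}))" by auto
  moreover have "card (insert (Release a b) ((subs a - {TT,FF}) \<union> (subs b - {TT,FF}))) \<le> 1 + card (subs a - {TT,FF}) + card (subs b - {TT,FF})"
    by (rule card_ins_un)
  ultimately show ?case using Release by simp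
next
  case (Next a)
  have "subs (Next a) - {TT,FF} = insert (Next a) (subs a - {TT,FF})" by auto
  moreover have "card (insert (Next a) (subs a - {TT,FF})) \<le> 1 + card (subs a - {TT,FF})"
    by (simp add: card_insert_le_m1 card_insert_if)
  ultimately show ?case using Next by simp
qed auto

definition good :: "'a ltl \<Rightarrow> bool" where
  "good t \<longleftrightarrow> temporal t \<and> t \<noteq> TT"

definition T :: "'a ltl \<Rightarrow> 'a ltl set" where
  "T s = {t \<in> subs s. good t}"

lemma finite_T: "finite (T s)" unfolding T_def using finite_subs[of s] by simp

lemma card_T: "card (T s) \<le> fsize s + 1"
proof -
  have "T s \<subseteq> insert FF (subs s - {TT, FF})" unfolding T_def good_def by auto
  hence "card (T s) \<le> card (insert FF (subs s - {TT, FF}))"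
    by (intro card_mono) (auto simp: finite_subs)
  also have "\<dots> \<le> card (subs s - {TT, FF}) + 1" by (simp add: card_insert_if finite_subs)
  finally show ?thesis using card_subs[of s] by simp
qed

lemma good_T: "t \<in> T s \<Longrightarrow> good t" unfolding T_def by auto

lemma T_closed: "t \<in> T s \<Longrightarrow> T t \<subseteq> T s"
  unfolding T_def using subs_trans by blast

lemma conjuncts_good: "good t \<Longrightarrow> conjuncts t = {t}"
  by (cases t) (auto simp: good_def)

lemma conjuncts_conj_list: "conjuncts (conj_list xs) = \<Union> (conjuncts ` set xs)"
  by (induction xs rule: conj_list.induct) auto

lemma conj_set_ex: "finite S \<Longrightarrow> \<exists>xs. set xs = S \<and> distinct xs"
  using finite_distinct_list by auto

lemma conj_set_conjuncts:
  assumes "finite S" "\<forall>s\<in>S. good s"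
  shows "conjuncts (conj_set S) = S"
proof -
  let ?xs = "SOME xs. set xs = S \<and> distinct xs"
  have "set ?xs = S" using someI_ex[OF conj_set_ex[OF assms(1)]] by blast
  moreover have "\<Union> (conjuncts ` S) = S" using assms(2) conjuncts_good by auto
  ultimately show ?thesis unfolding conj_set_def conjuncts_conj_list by simp
qed

lemma conj_set_empty: "conj_set {} = TT"
proof -
  have "(SOME xs. xs = [] \<and> distinct xs) = ([]::'a ltl list)" by (rule some_equality) auto
  thus ?thesis unfolding conj_set_def by simp
qed

lemma conj_set_single: "conj_set {t} = t"
proof -
  let ?xs = "SOME xs. set xs = {t} \<and> distinct xs"
  have h: "set ?xs = {t} \<and> distinct ?xs" using someI_ex[OF conj_set_ex[of "{t}"]] by blast
  hence "length ?xs = 1" using distinct_card by fastforce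
  hence "?xs = [t]" using h by (cases ?xs) auto
  thus ?thesis unfolding conj_set_def by simp
qed

definition C :: "'a ltl set \<Rightarrow> 'a ltl set" where
  "C Y = conj_set ` Pow Y"

lemma mk_and_C:
  assumes "finite Y" "\<forall>y\<in>Y. good y" "a \<in> C Y" "b \<in> C Y"
  shows "mk_and a b \<in> C Y"
proof -
  obtain S1 S2 where s: "S1 \<subseteq> Y" "S2 \<subseteq> Y" "a = conj_set S1" "b = conj_set S2"
    using assms unfolding C_def by auto
  have f: "finite S1" "finite S2" using s(1,2) assms(1) finite_subset by blast+
  have g1: "\<forall>s\<in>S1. good s" using s(1) assms(2) by blast
  have g2: "\<forall>s\<in>S2. good s" using s(2) assms(2) by blast
  have "mk_and a b = conj_set (S1 \<union> S2)" unfolding mk_and_def s(3,4)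
    by (simp only: conj_set_conjuncts[OF f(1) g1] conj_set_conjuncts[OF f(2) g2])
  moreover have "S1 \<union> S2 \<in> Pow Y" using s(1,2) by blast
  ultimately show ?thesis unfolding C_def by (simp only: image_eqI)
qed

lemma C_mono: "Y \<subseteq> Z \<Longrightarrow> C Y \<subseteq> C Z" unfolding C_def by auto

lemma TT_C: "TT \<in> C Y" unfolding C_def
proof -
  have "{} \<in> Pow Y" by blast
  hence "conj_set {} \<in> conj_set ` Pow Y" by (rule imageI)
  thus "TT \<in> conj_set ` Pow Y" by (simp only: conj_set_empty)
qed

lemma good_C: "t \<in> Y \<Longrightarrow> t \<in> C Y" unfolding C_def
proof -
  assume "t \<in> Y"
  hence "{t} \<in> Pow Y" by blast
  hence "conj_set {t} \<in> conj_set ` Pow Y" by (rule imageI)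
  thus "t \<in> conj_set ` Pow Y" by (simp only: conj_set_single)
qed

lemma T_sub: "T a \<subseteq> T (And a b)" "T b \<subseteq> T (And a b)"
  "T a \<subseteq> T (Or a b)" "T b \<subseteq> T (Or a b)" "T a \<subseteq> T (Next a)"
  "T a \<subseteq> T (Until a b)" "T b \<subseteq> T (Until a b)"
  "T a \<subseteq> T (Release a b)" "T b \<subseteq> T (Release a b)"
  unfolding T_def by auto

lemma good_all: "\<forall>y\<in>T s. good y" using good_T by blast

lemma self_C: "good t \<Longrightarrow> t \<in> C (T t)"
  by (rule good_C) (simp add: T_def subs_self)

lemma SIMP_C: "SIMP a \<subseteq> C (T a)"
proof (induction a)
  case (And a b)
  show ?case
  proof
    fix z assume "z \<in> SIMP (And a b)"
    then obtain a' b' where z: "z = mk_and a' b'" "a' \<in> SIMP a" "b' \<in> SIMP b" by auto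
    have "a' \<in> C (T (And a b))" using z(2) And(1) C_mono[OF T_sub(1)[where a=a and b=b]] by blast
    moreover have "b' \<in> C (T (And a b))" using z(3) And(2) C_mono[OF T_sub(2)[where a=a and b=b]] by blast
    ultimately show "z \<in> C (T (And a b))" unfolding z(1) by (rule mk_and_C[OF finite_T good_all])
  qed
next
  case (Or a b)
  have "SIMP (Or a b) = SIMP a \<union> SIMP b" by simp
  moreover have "SIMP a \<subseteq> C (T (Or a b))" using Or(1) C_mono[OF T_sub(3)[where a=a and b=b]] by (rule order_trans)
  moreover have "SIMP b \<subseteq> C (T (Or a b))" using Or(2) C_mono[OF T_sub(4)[where a=a and b=b]] by (rule order_trans)
  ultimately show ?case by (simp only: Un_least)
next
  case TT
  then show ?case using TT_C by auto
qed (simp_all add: self_C good_def)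

lemma mk_and_good_C:
  assumes "finite Y" "\<forall>y\<in>Y. good y" "a \<in> C Y" "t \<in> Y"
  shows "mk_and a t \<in> C Y"
  using mk_and_C[OF assms(1,2,3) good_C[OF assms(4)]] .

lemma pd_C: "pd I x a \<subseteq> C (T a)"
proof (induction a)
  case (And a b)
  show ?case
  proof
    fix z assume "z \<in> pd I x (And a b)"
    then obtain a' b' where z: "z = mk_and a' b'" "a' \<in> pd I x a" "b' \<in> pd I x b" by auto
    have "a' \<in> C (T (And a b))" using z(2) And(1) C_mono[OF T_sub(1)[where a=a and b=b]] by blast
    moreover have "b' \<in> C (T (And a b))" using z(3) And(2) C_mono[OF T_sub(2)[where a=a and b=b]] by blast
    ultimately show "z \<in> C (T (And a b))" unfolding z(1) by (rule mk_and_C[OF finite_T good_all])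
  qed
next
  case (Or a b)
  have "pd I x (Or a b) = pd I x a \<union> pd I x b" by simp
  moreover have "pd I x a \<subseteq> C (T (Or a b))" using Or(1) C_mono[OF T_sub(3)[where a=a and b=b]] by (rule order_trans)
  moreover have "pd I x b \<subseteq> C (T (Or a b))" using Or(2) C_mono[OF T_sub(4)[where a=a and b=b]] by (rule order_trans)
  ultimately show ?case by (simp only: Un_least)
next
  case (Next a)
  have "pd I x (Next a) = SIMP a" by simp
  thus ?case using SIMP_C[of a] C_mono[OF T_sub(5)[where a=a]] by simp
next
  case (Until a b)
  have u: "Until a b \<in> T (Until a b)" by (simp add: T_def good_def)
  have A: "pd I x a \<subseteq> C (T (Until a b))" using Until(1) C_mono[OF T_sub(6)[where a=a and b=b]] by (rule order_trans)
  have B: "pd I x b \<subseteq> C (T (Until a b))" using Until(2) C_mono[OF T_sub(7)[where a=a and b=b]] by (rule order_trans)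
  show ?case
  proof
    fix z assume "z \<in> pd I x (Until a b)"
    then consider "z \<in> pd I x b" | a' where "z = mk_and a' (Until a b)" "a' \<in> pd I x a" by auto
    then show "z \<in> C (T (Until a b))"
    proof cases
      case 1 then show ?thesis using B by blast
    next
      case 2
      have "a' \<in> C (T (Until a b))" using 2(2) A by blast
      thus ?thesis unfolding 2(1) by (rule mk_and_good_C[OF finite_T good_all _ u])
    qed
  qed
next
  case (Release a b)
  have u: "Release a b \<in> T (Release a b)" by (simp add: T_def good_def)
  have A: "pd I x a \<subseteq> C (T (Release a b))" using Release(1) C_mono[OF T_sub(8)[where a=a and b=b]] by (rule order_trans)
  have B: "pd I x b \<subseteq> C (T (Release a b))" using Release(2) C_mono[OF T_sub(9)[where a=a and b=b]] by (rule order_trans)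
  show ?case
  proof
    fix z assume "z \<in> pd I x (Release a b)"
    then consider a' b' where "z = mk_and a' b'" "a' \<in> pd I x a" "b' \<in> pd I x b"
      | b' where "z = mk_and b' (Release a b)" "b' \<in> pd I x b" by auto
    then show "z \<in> C (T (Release a b))"
    proof cases
      case 1
      have "a' \<in> C (T (Release a b))" using 1(2) A by blast
      moreover have "b' \<in> C (T (Release a b))" using 1(3) B by blast
      ultimately show ?thesis unfolding 1(1) by (rule mk_and_C[OF finite_T good_all])
    next
      case 2
      have "b' \<in> C (T (Release a b))" using 2(2) B by blast
      thus ?thesis unfolding 2(1) by (rule mk_and_good_C[OF finite_T good_all _ u])
    qed
  qed
qed (simp_all add: TT_C)

lemma pd_conj_list:
  assumes "set xs \<subseteq> T s"
  shows "pd I x (conj_list xs) \<subseteq> C (T s)"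
  using assms
proof (induction xs rule: conj_list.induct)
  case 1
  then show ?case using TT_C by simp
next
  case (2 a)
  have "a \<in> T s" using 2 by simp
  hence "C (T a) \<subseteq> C (T s)" by (intro C_mono T_closed)
  then show ?case using pd_C[of I x a] by simp
next
  case (3 a v va)
  have IH: "pd I x (conj_list (v # va)) \<subseteq> C (T s)" using 3 by simp
  have "a \<in> T s" using 3(2) by simp
  hence "C (T a) \<subseteq> C (T s)" by (intro C_mono T_closed)
  hence A: "pd I x a \<subseteq> C (T s)" using pd_C[of I x a] by (rule order_trans[rotated])
  show ?case
  proof
    fix z assume "z \<in> pd I x (conj_list (a # v # va))"
    then obtain a' b' where z: "z = mk_and a' b'" "a' \<in> pd I x a" "b' \<in> pd I x (conj_list (v # va))" by auto
    have "a' \<in> C (T s)" using z(2) A by blast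
    moreover have "b' \<in> C (T s)" using z(3) IH by blast
    ultimately show "z \<in> C (T s)" unfolding z(1) by (rule mk_and_C[OF finite_T good_all])
  qed
qed

lemma pd_conj_set:
  assumes "S \<subseteq> T s"
  shows "pd I x (conj_set S) \<subseteq> C (T s)"
proof -
  have "finite S" using assms finite_T finite_subset by blast
  then have "set (SOME xs. set xs = S \<and> distinct xs) = S"
    using someI_ex[OF conj_set_ex] by blast
  thus ?thesis unfolding conj_set_def using pd_conj_list assms by metis
qed

lemma pd_word_C: "z \<in> C (T s) \<Longrightarrow> pd_word I w z \<subseteq> C (T s)"
proof (induction w arbitrary: z)
  case Nil then show ?case by simp
next
  case (Cons x w)
  obtain S where S: "S \<subseteq> T s" "z = conj_set S" using Cons.prems unfolding C_def by auto
  have P: "pd I x z \<subseteq> C (T s)" unfolding S(2) by (rule pd_conj_set[OF S(1)])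
  show ?case
  proof
    fix y assume "y \<in> pd_word I (x # w) z"
    then obtain z' where "z' \<in> pd I x z" "y \<in> pd_word I w z'" by auto
    then show "y \<in> C (T s)" using Cons.IH P by blast
  qed
qed

lemma desc_sub: "descendants I s \<subseteq> insert s (C (T s))"
proof
  fix z assume "z \<in> descendants I s"
  then obtain w where w: "z \<in> pd_word I w s" unfolding descendants_def by auto
  show "z \<in> insert s (C (T s))"
  proof (cases w)
    case Nil then show ?thesis using w by simp
  next
    case (Cons x w')
    then obtain y where y: "y \<in> pd I x s" "z \<in> pd_word I w' y" using w by auto
    have "y \<in> C (T s)" using y(1) pd_C[of I x s] by blast
    hence "pd_word I w' y \<subseteq> C (T s)" by (rule pd_word_C)
    then show ?thesis using y(2) by blast
  qed
qed

theorem lemma10: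
  fixes I :: "'s::finite \<Rightarrow> 'a::finite set"
  shows "\<exists>c::nat. \<forall>\<phi> :: 'a ltl.
           finite (descendants I \<phi>) \<and> card (descendants I \<phi>) \<le> c * 2 ^ fsize \<phi>"
proof (intro exI allI)
  fix s :: "'a ltl"
  have fT: "finite (T s)" by (rule finite_T)
  have fin: "finite (insert s (C (T s)))" unfolding C_def using fT by simp
  have "card (descendants I s) \<le> card (insert s (C (T s)))"
    using card_mono[OF fin desc_sub] .
  also have "\<dots> \<le> 1 + card (C (T s))"
  proof -
    have "finite (C (T s))" unfolding C_def using fT by simp
    thus ?thesis by (simp add: card_insert_if)
  qed
  also have "card (C (T s)) \<le> card (Pow (T s))" unfolding C_def
    by (rule card_image_le) (simp add: fT)
  also have "card (Pow (T s)) = 2 ^ card (T s)" using fT by (rule card_Pow)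
  also have "(2::nat) ^ card (T s) \<le> 2 ^ (fsize s + 1)" using card_T[of s] by (intro power_increasing) auto
  finally have "card (descendants I s) \<le> 1 + 2 * 2 ^ fsize s" by simp
  also have "\<dots> \<le> 3 * 2 ^ fsize s" by simp
  finally show "finite (descendants I s) \<and> card (descendants I s) \<le> 3 * 2 ^ fsize s"
    using finite_subset[OF desc_sub fin] by simp
qed

end
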